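(* Let $G$ be a simple graph with $n$ vertices, let $\theta_1(G),\ldots,\theta_n(G)$ be the eigenvalues of its Seidel matrix $S(G)$, and let $\theta_1(K_n),\ldots,\theta_n(K_n)$ be the eigenvalues of the Seidel matrix of the complete graph $K_n$. Then (i) $\theta_1(G)^2+\cdots+\theta_n(G)^2=(n-1)^2+n-1$; (ii) $\theta_1(G)^4+\cdots+\theta_n(G)^4\le \theta_1(K_n)^4+\cdots+\theta_n(K_n)^4=(n-1)^4+n-1$; (iii) $\max_{1\le i\le n}\theta_i(G)^2\le \max_{1\le i\le n}\theta_i(K_n)^2=(n-1)^2$.
   Context: For a simple graph $G$ with vertex set $\{v_1,\ldots,v_n\}$, the Seidel matrix $S(G)=(s_{ij})$ is the $n\times n$ matrix with $s_{ii}=0$ for all $i$, and for $i\ne j$, $s_{ij}=-1$ if $v_i$ and $v_j$ are adjacent and $s_{ij}=1$ otherwise. Its eigenvalues are real. $K_n$ denotes the complete graph on $n$ vertices, whose Seidel matrix is $I-J$. *)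

theory Defs
  imports "Jordan_Normal_Form.Jordan_Normal_Form"
begin

definition simple_graph :: "nat \<Rightarrow> (nat \<Rightarrow> nat \<Rightarrow> bool) \<Rightarrow> bool" where
  "simple_graph n E \<longleftrightarrow> (\<forall>i<n. \<forall>j<n. E i j = E j i) \<and> (\<forall>i<n. \<not> E i i)"

definition seidel :: "nat \<Rightarrow> (nat \<Rightarrow> nat \<Rightarrow> bool) \<Rightarrow> real mat" where
  "seidel n E = mat n n (\<lambda>(i,j). if i = j then 0 else if E i j then -1 else 1)"

definition complete_adj :: "nat \<Rightarrow> nat \<Rightarrow> bool" where
  "complete_adj i j \<longleftrightarrow> i \<noteq> j"

text \<open>es is the list of eigenvalues of A, counted with algebraic multiplicity.\<close>
definition eigenvalue_list :: "real mat \<Rightarrow> real list \<Rightarrow> bool" where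
  "eigenvalue_list A es \<longleftrightarrow> char_poly A = (\<Prod>a\<leftarrow>es. [:- a, 1:])"

end

theory Submission imports Defs "Jordan_Normal_Form.Schur_Decomposition" begin

definition tr :: "'a::comm_ring_1 mat \<Rightarrow> 'a" where
  "tr A = (\<Sum>i<dim_row A. A $$ (i,i))"

lemma mult_entry: "A \<in> carrier_mat n n \<Longrightarrow> B \<in> carrier_mat n n \<Longrightarrow> i < n \<Longrightarrow> j < n \<Longrightarrow>
  (A * B) $$ (i,j) = (\<Sum>k<n. A $$ (i,k) * B $$ (k,j))"
  by (auto simp: scalar_prod_def row_def col_def lessThan_atLeast0)

lemma row_col_sum: "A \<in> carrier_mat n n \<Longrightarrow> B \<in> carrier_mat n n \<Longrightarrow> i < n \<Longrightarrow> j < n \<Longrightarrow>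
  row A i \<bullet> col B j = (\<Sum>k<n. A $$ (i,k) * B $$ (k,j))"
  by (auto simp: scalar_prod_def row_def col_def lessThan_atLeast0)

lemma tr_comm: assumes "A \<in> carrier_mat n n" "B \<in> carrier_mat n n"
  shows "tr (A * B) = tr (B * A)"
proof -
  have "tr (A * B) = (\<Sum>i<n. \<Sum>k<n. A $$ (i,k) * B $$ (k,i))"
    unfolding tr_def using assms by (auto simp: row_col_sum intro!: sum.cong)
  also have "\<dots> = (\<Sum>k<n. \<Sum>i<n. B $$ (k,i) * A $$ (i,k))"
    by (subst sum.swap) (simp add: mult.commute)
  also have "\<dots> = tr (B * A)"
    unfolding tr_def using assms by (auto simp: row_col_sum intro!: sum.cong)
  finally show ?thesis .
qed

lemma ut_mult: assumes A: "A \<in> carrier_mat n n" and B: "B \<in> carrier_mat n n"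
  and uA: "upper_triangular A" and uB: "upper_triangular B"
  shows "upper_triangular (A * B) \<and> (\<forall>i<n. (A * B) $$ (i,i) = A $$ (i,i) * B $$ (i,i))"
proof (intro conjI allI impI)
  show "upper_triangular (A * B)"
  proof (rule upper_triangularI)
    fix i j assume ji: "j < i" and i: "i < dim_row (A * B)"
    hence i': "i < n" using A by auto
    have "(A * B) $$ (i,j) = (\<Sum>k<n. A $$ (i,k) * B $$ (k,j))"
      using mult_entry[OF A B i'] ji i' by auto
    also have "\<dots> = 0"
    proof (rule sum.neutral, rule ballI)
      fix k assume k: "k \<in> {..<n}"
      show "A $$ (i,k) * B $$ (k,j) = 0"
      proof (cases "k < i")
        case True thus ?thesis using upper_triangularD[OF uA True] A i' by auto
      next
        case False hence "j < k" using ji by auto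
        thus ?thesis using upper_triangularD[OF uB \<open>j<k\<close>] B k by auto
      qed
    qed
    finally show "(A * B) $$ (i,j) = 0" .
  qed
next
  fix i assume i: "i < n"
  have "(A * B) $$ (i,i) = (\<Sum>k<n. A $$ (i,k) * B $$ (k,i))"
    using mult_entry[OF A B i i] .
  also have "\<dots> = A $$ (i,i) * B $$ (i,i)"
  proof (rule sum.remove[of _ i, THEN trans])
    show "finite {..<n}" by simp
    show "i \<in> {..<n}" using i by simp
    have "(\<Sum>k\<in>{..<n} - {i}. A $$ (i,k) * B $$ (k,i)) = 0"
    proof (rule sum.neutral, rule ballI)
      fix k assume k: "k \<in> {..<n} - {i}"
      show "A $$ (i,k) * B $$ (k,i) = 0"
      proof (cases "k < i")
        case True thus ?thesis using upper_triangularD[OF uA True] A i by auto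
      next
        case False hence ik: "i < k" using k by auto
        thus ?thesis using upper_triangularD[OF uB ik] B k by auto
      qed
    qed
    thus "A $$ (i, i) * B $$ (i, i) + (\<Sum>k\<in>{..<n} - {i}. A $$ (i, k) * B $$ (k, i)) = A $$ (i, i) * B $$ (i, i)" by simp
  qed
  finally show "(A * B) $$ (i,i) = A $$ (i,i) * B $$ (i,i)" .
qed

lemma ut_pow: assumes A: "A \<in> carrier_mat n n" and uA: "upper_triangular A"
  shows "upper_triangular (A ^\<^sub>m k) \<and> (\<forall>i<n. (A ^\<^sub>m k) $$ (i,i) = (A $$ (i,i)) ^ k)"
proof (induct k)
  case 0 thus ?case using A by auto
next
  case (Suc k)
  thus ?case using ut_mult[OF pow_carrier_mat[OF A, of k] A _ uA] by (simp add: power_commutes)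
qed

lemma power_sum_tr:
  fixes A :: "real mat"
  assumes A: "A \<in> carrier_mat n n" and c: "char_poly A = (\<Prod>a\<leftarrow>es. [:- a, 1:])"
  shows "length es = n \<and> (\<Sum>x\<leftarrow>es. x ^ k) = tr (A ^\<^sub>m k)"
proof -
  obtain B P Q where sd: "schur_decomposition A es = (B,P,Q)" using prod_cases3 by blast
  from schur_decomposition[OF A c sd] have wit: "similar_mat_wit A B P Q"
    and uB: "upper_triangular B" and dB: "diag_mat B = es" by auto
  note D = similar_mat_witD2[OF A wit]
  have B: "B \<in> carrier_mat n n" and P: "P \<in> carrier_mat n n"
    and Q: "Q \<in> carrier_mat n n" and QP: "Q * P = 1\<^sub>m n" using D by auto
  have Ak: "A ^\<^sub>m k = P * B ^\<^sub>m k * Q"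
    using similar_mat_witD2[OF pow_carrier_mat[OF A] similar_mat_wit_pow[OF wit, of k]] by blast
  have len: "length es = n" using dB B unfolding diag_mat_def by auto
  have Bk: "B ^\<^sub>m k \<in> carrier_mat n n" using B by (rule pow_carrier_mat)
  have "tr (A ^\<^sub>m k) = tr (P * (B ^\<^sub>m k * Q))" by (simp only: Ak assoc_mult_mat[OF P Bk Q])
  also have "\<dots> = tr ((B ^\<^sub>m k * Q) * P)" by (rule tr_comm[OF P mult_carrier_mat[OF Bk Q]])
  also have "(B ^\<^sub>m k * Q) * P = B ^\<^sub>m k" using assoc_mult_mat[OF Bk Q P] QP right_mult_one_mat[OF Bk] by simp
  also have "tr (B ^\<^sub>m k) = (\<Sum>i<n. (B $$ (i,i)) ^ k)" unfolding tr_def using ut_pow[OF B uB, of k] Bk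
    by (intro sum.cong) auto
  also have "\<dots> = (\<Sum>i<n. (es ! i) ^ k)" using dB B unfolding diag_mat_def by auto
  also have "\<dots> = (\<Sum>x\<leftarrow>es. x ^ k)" using len
    by (simp add: sum_list_sum_nth atLeast0LessThan)
  finally show ?thesis using len by simp
qed


lemma pow2: "A \<in> carrier_mat n n \<Longrightarrow> A ^\<^sub>m 2 = A * A"
  by (simp add: numeral_eq_Suc)

lemma pow4: assumes A: "A \<in> carrier_mat n n" shows "A ^\<^sub>m 4 = (A * A) * (A * A)"
proof -
  have "A ^\<^sub>m 4 = ((A * A) * A) * A" using A by (simp add: numeral_eq_Suc)
  also have "\<dots> = (A * A) * (A * A)" using assoc_mult_mat[OF mult_carrier_mat[OF A A] A A] .
  finally show ?thesis .
qed

definition sd :: "(nat \<Rightarrow> nat \<Rightarrow> bool) \<Rightarrow> nat \<Rightarrow> nat \<Rightarrow> real" where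
  "sd E i j = (if i = j then 0 else if E i j then -1 else 1)"

lemma seidel_carrier: "seidel n E \<in> carrier_mat n n"
  unfolding seidel_def by simp

lemma seidel_entry: "i < n \<Longrightarrow> j < n \<Longrightarrow> seidel n E $$ (i,j) = sd E i j"
  unfolding seidel_def sd_def by simp

lemma sd_sym: "simple_graph n E \<Longrightarrow> i < n \<Longrightarrow> j < n \<Longrightarrow> sd E i j = sd E j i"
  unfolding simple_graph_def sd_def by auto

lemma sd_sq: "simple_graph n E \<Longrightarrow> i < n \<Longrightarrow> j < n \<Longrightarrow> sd E i j * sd E j i = (if i = j then 0 else 1)"
  unfolding simple_graph_def sd_def by auto

lemma sum_ind: "i < (n::nat) \<Longrightarrow> (\<Sum>k<n. if k = i then (1::real) else 0) = 1"
  by (subst sum.delta) auto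

lemma sum_not1: "i < (n::nat) \<Longrightarrow> (\<Sum>k<n. if k = i then 0 else (c::real)) = (real n - 1) * c"
proof -
  assume i: "i < n"
  have "(\<Sum>k<n. if k = i then 0 else c) = (\<Sum>k<n. c - c * (if k = i then 1 else 0))"
    by (intro sum.cong) auto
  also have "\<dots> = real n * c - c * (\<Sum>k<n. if k = i then 1 else 0)"
    by (simp add: sum_subtractf sum_distrib_left[symmetric])
  also have "\<dots> = (real n - 1) * c" using sum_ind[OF i] by (simp add: algebra_simps)
  finally show ?thesis .
qed

lemma sum_not2: "i < (n::nat) \<Longrightarrow> j < n \<Longrightarrow> i \<noteq> j \<Longrightarrow>
  (\<Sum>k<n. if k = i \<or> k = j then 0 else (1::real)) = real n - 2"
proof -
  assume i: "i < n" and j: "j < n" and ij: "i \<noteq> j"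
  have "(\<Sum>k<n. if k = i \<or> k = j then 0 else (1::real)) =
     (\<Sum>k<n. 1 - (if k = i then 1 else 0) - (if k = j then 1 else 0))"
    using ij by (intro sum.cong) auto
  also have "\<dots> = real n - 1 - 1"
    by (simp only: sum_subtractf sum_ind[OF i] sum_ind[OF j]) simp
  finally show ?thesis by simp
qed

lemma tr2: assumes g: "simple_graph n E"
  shows "tr (seidel n E ^\<^sub>m 2) = real n * (real n - 1)"
proof -
  let ?S = "seidel n E"
  have "tr (?S ^\<^sub>m 2) = (\<Sum>i<n. \<Sum>k<n. sd E i k * sd E k i)"
    unfolding pow2[OF seidel_carrier] tr_def using seidel_carrier[of n E]
    by (auto simp: row_col_sum[OF seidel_carrier seidel_carrier] seidel_entry intro!: sum.cong)
  also have "\<dots> = (\<Sum>i<n. \<Sum>k<n. if k = i then 0 else 1)"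
    using sd_sq[OF g] by (intro sum.cong) auto
  also have "\<dots> = (\<Sum>i<n. real n - 1)"
    using sum_not1[where c=1] by (intro sum.cong) auto
  finally show ?thesis by simp
qed


definition mm :: "(nat \<Rightarrow> nat \<Rightarrow> bool) \<Rightarrow> nat \<Rightarrow> nat \<Rightarrow> nat \<Rightarrow> real" where
  "mm E n i j = (\<Sum>k<n. sd E i k * sd E k j)"

lemma SS_entry: "i < n \<Longrightarrow> j < n \<Longrightarrow> (seidel n E * seidel n E) $$ (i,j) = mm E n i j"
  using seidel_carrier[of n E]
  by (auto simp: row_col_sum[OF seidel_carrier seidel_carrier] seidel_entry mm_def intro!: sum.cong)

lemma mm_sym: "simple_graph n E \<Longrightarrow> i < n \<Longrightarrow> j < n \<Longrightarrow> mm E n i j = mm E n j i"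
  unfolding mm_def by (intro sum.cong) (auto simp: sd_sym mult.commute)

lemma mm_diag: "simple_graph n E \<Longrightarrow> i < n \<Longrightarrow> mm E n i i = real n - 1"
proof -
  assume g: "simple_graph n E" and i: "i < n"
  have "mm E n i i = (\<Sum>k<n. if k = i then 0 else 1)"
    unfolding mm_def using sd_sq[OF g i] by (intro sum.cong) auto
  thus ?thesis using sum_not1[OF i, of 1] by simp
qed

lemma sd_abs: "\<bar>sd E i k * sd E k j\<bar> \<le> (if k = i \<or> k = j then 0 else 1)"
  unfolding sd_def by auto

lemma mm_off: "i < n \<Longrightarrow> j < n \<Longrightarrow> i \<noteq> j \<Longrightarrow> \<bar>mm E n i j\<bar> \<le> real n - 2"
proof -
  assume i: "i < n" and j: "j < n" and ij: "i \<noteq> j"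
  have "\<bar>mm E n i j\<bar> \<le> (\<Sum>k<n. \<bar>sd E i k * sd E k j\<bar>)"
    unfolding mm_def by (rule sum_abs)
  also have "\<dots> \<le> (\<Sum>k<n. if k = i \<or> k = j then 0 else 1)"
    by (rule sum_mono) (rule sd_abs)
  also have "\<dots> = real n - 2" by (rule sum_not2[OF i j ij])
  finally show ?thesis .
qed

lemma simple_complete: "simple_graph n complete_adj"
  unfolding simple_graph_def complete_adj_def by auto

lemma mm_K: "i < n \<Longrightarrow> j < n \<Longrightarrow> i \<noteq> j \<Longrightarrow> mm complete_adj n i j = real n - 2"
proof -
  assume i: "i < n" and j: "j < n" and ij: "i \<noteq> j"
  have "mm complete_adj n i j = (\<Sum>k<n. if k = i \<or> k = j then 0 else 1)"
    unfolding mm_def sd_def complete_adj_def by (intro sum.cong) auto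
  thus ?thesis using sum_not2[OF i j ij] by simp
qed

lemma tr4: assumes g: "simple_graph n E"
  shows "tr (seidel n E ^\<^sub>m 4) = (\<Sum>i<n. \<Sum>j<n. (mm E n i j)^2)"
proof -
  let ?S = "seidel n E"
  have SS: "?S * ?S \<in> carrier_mat n n" using seidel_carrier by (rule mult_carrier_mat) (rule seidel_carrier)
  have "tr (?S ^\<^sub>m 4) = (\<Sum>i<n. \<Sum>k<n. mm E n i k * mm E n k i)"
    unfolding pow4[OF seidel_carrier] tr_def using SS
    by (auto simp: mult_entry[OF SS SS] SS_entry intro!: sum.cong)
  also have "\<dots> = (\<Sum>i<n. \<Sum>j<n. (mm E n i j)^2)"
    using mm_sym[OF g] by (intro sum.cong) (auto simp: power2_eq_square)
  finally show ?thesis .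
qed

lemma tr4_le: assumes g: "simple_graph n E"
  shows "tr (seidel n E ^\<^sub>m 4) \<le> tr (seidel n complete_adj ^\<^sub>m 4)"
proof -
  have "tr (seidel n E ^\<^sub>m 4) = (\<Sum>i<n. \<Sum>j<n. (mm E n i j)^2)" by (rule tr4[OF g])
  also have "\<dots> \<le> (\<Sum>i<n. \<Sum>j<n. (mm complete_adj n i j)^2)"
  proof (intro sum_mono)
    fix i j assume i: "i \<in> {..<n}" and j: "j \<in> {..<n}"
    show "(mm E n i j)^2 \<le> (mm complete_adj n i j)^2"
    proof (cases "i = j")
      case True thus ?thesis using mm_diag[OF g] mm_diag[OF simple_complete] i by simp
    next
      case False
      have a: "\<bar>mm E n i j\<bar> \<le> real n - 2" using mm_off False i j by auto
      have "\<bar>mm E n i j\<bar>^2 \<le> (real n - 2)^2" by (rule power_mono[OF a]) simp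
      thus ?thesis using mm_K[of i n j] False i j by simp
    qed
  qed
  also have "\<dots> = tr (seidel n complete_adj ^\<^sub>m 4)" by (rule tr4[OF simple_complete, symmetric])
  finally show ?thesis .
qed

lemma tr4_K: "tr (seidel n complete_adj ^\<^sub>m 4) = (real n - 1)^4 + (real n - 1)"
proof -
  have "tr (seidel n complete_adj ^\<^sub>m 4) = (\<Sum>i<n. \<Sum>j<n. (mm complete_adj n i j)^2)"
    by (rule tr4[OF simple_complete])
  also have "\<dots> = (\<Sum>i<n. \<Sum>j<n. if j = i then (real n - 1)^2 else (real n - 2)^2)"
    using mm_diag[OF simple_complete] mm_K by (intro sum.cong) auto
  also have "\<dots> = (\<Sum>i<n. (real n - 1)^2 + (real n - 1) * (real n - 2)^2)"
  proof (intro sum.cong refl)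
    fix i assume i: "i \<in> {..<n}"
    have "(\<Sum>j<n. if j = i then (real n - 1)^2 else (real n - 2)^2) =
      (\<Sum>j<n. (real n - 1)^2 * (if j = i then 1 else 0) + (if j = i then 0 else (real n - 2)^2))"
      by (intro sum.cong) auto
    also have "\<dots> = (real n - 1)^2 + (real n - 1) * (real n - 2)^2"
      using sum_ind[of i n] sum_not1[of i n "(real n - 2)^2"] i
      by (simp add: sum.distrib sum_distrib_left[symmetric])
    finally show "(\<Sum>j<n. if j = i then (real n - 1)^2 else (real n - 2)^2) = (real n - 1)^2 + (real n - 1) * (real n - 2)^2" .
  qed
  also have "\<dots> = (real n - 1)^4 + (real n - 1)"
    by (simp add: power2_eq_square power4_eq_xxxx algebra_simps)
  finally show ?thesis .
qed


lemma root_iff: "poly (\<Prod>a\<leftarrow>es. [:- a, 1:]) (x::real) = 0 \<longleftrightarrow> x \<in> set es"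
  by (induct es) auto

lemma eig_bound: assumes ev: "eigenvalue (seidel n E) x"
  shows "x^2 \<le> (real n - 1)^2"
proof -
  let ?S = "seidel n E"
  from ev obtain v where v: "eigenvector ?S v x" unfolding eigenvalue_def by auto
  have dimS: "dim_row ?S = n" and dimC: "dim_col ?S = n" using seidel_carrier[of n E] by auto
  from v[unfolded eigenvector_def dimS] have vc: "v \<in> carrier_vec n" and v0: "v \<noteq> 0\<^sub>v n"
    and Sv: "?S *\<^sub>v v = x \<cdot>\<^sub>v v" by auto
  have n: "{..<n} \<noteq> {}"
  proof
    assume "{..<n} = {}" hence "n = 0" by auto
    hence "v = 0\<^sub>v n" using vc by (intro eq_vecI) auto
    thus False using v0 by simp
  qed
  define M where "M = Max ((\<lambda>j. \<bar>v $ j\<bar>) ` {..<n})"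
  have "M \<in> (\<lambda>j. \<bar>v $ j\<bar>) ` {..<n}" unfolding M_def using n by (intro Max_in) auto
  then obtain i where i: "i < n" and Mi: "M = \<bar>v $ i\<bar>" by auto
  have Mj: "\<And>j. j < n \<Longrightarrow> \<bar>v $ j\<bar> \<le> M" unfolding M_def by (intro Max_ge) auto
  have M0: "M > 0"
  proof (rule ccontr)
    assume "\<not> M > 0"
    hence "\<And>j. j < n \<Longrightarrow> v $ j = 0" using Mj by (meson abs_ge_zero abs_le_zero_iff dual_order.trans not_le)
    hence "v = 0\<^sub>v n" using vc by (intro eq_vecI) auto
    thus False using v0 by simp
  qed
  have "x * v $ i = (?S *\<^sub>v v) $ i" using Sv i vc by simp
  also have "\<dots> = (\<Sum>j<n. sd E i j * v $ j)"
    using i vc dimS dimC by (auto simp: scalar_prod_def row_def seidel_entry lessThan_atLeast0 intro!: sum.cong)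
  finally have eq: "x * v $ i = (\<Sum>j<n. sd E i j * v $ j)" .
  have "\<bar>x\<bar> * M = \<bar>\<Sum>j<n. sd E i j * v $ j\<bar>" using eq Mi by (metis abs_mult)
  also have "\<dots> \<le> (\<Sum>j<n. \<bar>sd E i j * v $ j\<bar>)" by (rule sum_abs)
  also have "\<dots> \<le> (\<Sum>j<n. if j = i then 0 else M)"
  proof (rule sum_mono)
    fix j assume j: "j \<in> {..<n}"
    show "\<bar>sd E i j * v $ j\<bar> \<le> (if j = i then 0 else M)"
      using Mj[of j] j unfolding sd_def by (auto simp: abs_mult)
  qed
  also have "\<dots> = (real n - 1) * M" by (rule sum_not1[OF i])
  finally have "\<bar>x\<bar> * M \<le> (real n - 1) * M" .
  hence ax: "\<bar>x\<bar> \<le> real n - 1" using M0 by simp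
  have "\<bar>x\<bar>^2 \<le> (real n - 1)^2" by (rule power_mono[OF ax]) simp
  thus ?thesis by simp
qed

lemma K_eig: assumes n: "n \<ge> 1" shows "eigenvalue (seidel n complete_adj) (1 - real n)"
proof -
  let ?S = "seidel n complete_adj"
  let ?v = "vec n (\<lambda>_. 1::real)"
  have dimS: "dim_row ?S = n" and dimC: "dim_col ?S = n" using seidel_carrier[of n complete_adj] by auto
  have "?S *\<^sub>v ?v = (1 - real n) \<cdot>\<^sub>v ?v"
  proof (intro eq_vecI)
    fix i assume "i < dim_vec ((1 - real n) \<cdot>\<^sub>v ?v)"
    hence i: "i < n" by simp
    have "(?S *\<^sub>v ?v) $ i = (\<Sum>j<n. sd complete_adj i j)"
      using i dimS dimC by (auto simp: scalar_prod_def row_def seidel_entry lessThan_atLeast0 intro!: sum.cong)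
    also have "\<dots> = (\<Sum>j<n. if j = i then 0 else -1)"
      unfolding sd_def complete_adj_def by (intro sum.cong) auto
    also have "\<dots> = 1 - real n" using sum_not1[OF i, of "-1"] by simp
    finally show "(?S *\<^sub>v ?v) $ i = ((1 - real n) \<cdot>\<^sub>v ?v) $ i" using i by simp
  qed (simp add: dimS)
  moreover have "?v \<noteq> 0\<^sub>v n"
  proof
    assume "?v = 0\<^sub>v n"
    hence "?v $ 0 = 0\<^sub>v n $ 0" by simp
    thus False using n by simp
  qed
  ultimately show ?thesis unfolding eigenvalue_def eigenvector_def dimS by (intro exI[of _ ?v]) simp
qed

theorem lemma3p1:
  fixes n :: nat and E :: "nat \<Rightarrow> nat \<Rightarrow> bool" and th thK :: "real list"
  assumes "n \<ge> 1
    \<and> simple_graph n E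
    \<and> eigenvalue_list (seidel n E) th
    \<and> eigenvalue_list (seidel n complete_adj) thK"
  shows "(\<Sum>x\<leftarrow>th. x ^ 2) = (real n - 1) ^ 2 + (real n - 1)
    \<and> (\<Sum>x\<leftarrow>th. x ^ 4) \<le> (\<Sum>x\<leftarrow>thK. x ^ 4)
    \<and> (\<Sum>x\<leftarrow>thK. x ^ 4) = (real n - 1) ^ 4 + (real n - 1)
    \<and> Max ((\<lambda>x. x ^ 2) ` set th) \<le> Max ((\<lambda>x. x ^ 2) ` set thK)
    \<and> Max ((\<lambda>x. x ^ 2) ` set thK) = (real n - 1) ^ 2"
proof -
  from assms have n: "n \<ge> 1" and g: "simple_graph n E"
    and c: "char_poly (seidel n E) = (\<Prod>a\<leftarrow>th. [:- a, 1:])"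
    and cK: "char_poly (seidel n complete_adj) = (\<Prod>a\<leftarrow>thK. [:- a, 1:])"
    unfolding eigenvalue_list_def by auto
  note P = power_sum_tr[OF seidel_carrier c] and PK = power_sum_tr[OF seidel_carrier cK]
  have i: "(\<Sum>x\<leftarrow>th. x ^ 2) = (real n - 1) ^ 2 + (real n - 1)"
    using P[of 2] tr2[OF g] by (simp add: power2_eq_square algebra_simps)
  have ii: "(\<Sum>x\<leftarrow>th. x ^ 4) \<le> (\<Sum>x\<leftarrow>thK. x ^ 4)"
    using P[of 4] PK[of 4] tr4_le[OF g] by simp
  have iii: "(\<Sum>x\<leftarrow>thK. x ^ 4) = (real n - 1) ^ 4 + (real n - 1)"
    using PK[of 4] tr4_K by simp
  have bnd: "\<And>E es x. char_poly (seidel n E) = (\<Prod>a\<leftarrow>es. [:- a, 1:]) \<Longrightarrow> x \<in> set es \<Longrightarrow> x^2 \<le> (real n - 1)^2"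
  proof -
    fix E es x assume c: "char_poly (seidel n E) = (\<Prod>a\<leftarrow>es. [:- a, 1:])" and x: "x \<in> set es"
    have "eigenvalue (seidel n E) x"
      unfolding eigenvalue_root_char_poly[OF seidel_carrier] c root_iff using x .
    thus "x^2 \<le> (real n - 1)^2" by (rule eig_bound)
  qed
  have inK: "1 - real n \<in> set thK"
    using K_eig[OF n] unfolding eigenvalue_root_char_poly[OF seidel_carrier] cK root_iff .
  have MK: "Max ((\<lambda>x. x ^ 2) ` set thK) = (real n - 1) ^ 2"
  proof (rule antisym)
    show "Max ((\<lambda>x. x ^ 2) ` set thK) \<le> (real n - 1) ^ 2"
      using inK bnd[OF cK] by (subst Max_le_iff) auto
    have "(1 - real n)^2 \<le> Max ((\<lambda>x. x ^ 2) ` set thK)" using inK by (intro Max_ge) auto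
    thus "(real n - 1) ^ 2 \<le> Max ((\<lambda>x. x ^ 2) ` set thK)" by (simp add: power2_commute)
  qed
  have ne: "th \<noteq> []" using P[of 0] n by auto
  have "Max ((\<lambda>x. x ^ 2) ` set th) \<le> (real n - 1) ^ 2"
    using ne bnd[OF c] by (subst Max_le_iff) auto
  with MK i ii iii show ?thesis by simp
qed

end
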